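(* Let $q$ be an exponential factor. Then $\Gamma(q):=\pi_1(\mathbf B([(1,q)]))\cong\mathbb Z^{|\mathrm{Levels}(q)|}$.
   Context: Exponential factors: finite sums $q=\sum_ka_kx^k$, $a_k\in\mathbb C$, $k\in\mathbb Q_{>0}$; $\mathrm{slope}(q)$ = largest exponent with nonzero coefficient ($0$ if $q=0$); $\mathrm{ram}(q)$ = least $r\ge1$ with $q\in x^{1/r}\mathbb C[x^{1/r}]$. Galois operator $\sigma(\sum a_kx^k)=\sum a_ke^{-2\pi\sqrt{-1}k}x^k$. $\mathrm{Levels}(q)=\{\mathrm{slope}(q-\sigma^i(q)):i\in\mathbb Z\}\setminus\{0\}$. For $Q=[(1,q)]$, with $r=\mathrm{ram}(q)$, $K=\mathrm{slope}(q)$, $s=rK$: $\mathbf B(Q)=\{\mathbf a\in\mathbb C^s:\mathrm{slope}(\sigma^k(q_{\mathbf a})-\sigma^l(q_{\mathbf a}))=\mathrm{slope}(\sigma^k(q)-\sigma^l(q))\ \forall\,0\le k,l\le r\}$, where $q_{\mathbf a}=\sum_{j=1}^sa_jx^{j/r}$, with the subspace topology. *)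

theory Defs
  imports "HOL-Analysis.Analysis" "HOL-Algebra.Free_Abelian_Groups"
begin

text \<open>An exponential factor q = sum a_k x^k (k in Q_{>0}) is represented by its
coefficient function rat => complex, with finite support in the positive rationals.\<close>

definition exp_factor :: "(rat \<Rightarrow> complex) \<Rightarrow> bool" where
  "exp_factor q \<longleftrightarrow> finite {k. q k \<noteq> 0} \<and> (\<forall>k. q k \<noteq> 0 \<longrightarrow> k > 0)"

definition slope :: "(rat \<Rightarrow> complex) \<Rightarrow> rat" where
  "slope q = (if {k. q k \<noteq> 0} = {} then 0 else Max {k. q k \<noteq> 0})"

text \<open>q lies in x^(1/r) C[x^(1/r)] iff every exponent with nonzero coefficient is a
positive integer multiple of 1/r.\<close>
definition ram :: "(rat \<Rightarrow> complex) \<Rightarrow> nat" where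
  "ram q = (LEAST r::nat. r \<ge> 1 \<and>
      (\<forall>k. q k \<noteq> 0 \<longrightarrow> k > 0 \<and> of_nat r * k \<in> \<int>))"

definition sigma :: "(rat \<Rightarrow> complex) \<Rightarrow> (rat \<Rightarrow> complex)" where
  "sigma q = (\<lambda>k. exp (- 2 * of_real pi * \<i> * of_rat k) * q k)"

definition sigma_inv :: "(rat \<Rightarrow> complex) \<Rightarrow> (rat \<Rightarrow> complex)" where
  "sigma_inv q = (\<lambda>k. exp (2 * of_real pi * \<i> * of_rat k) * q k)"

definition sigma_int :: "int \<Rightarrow> (rat \<Rightarrow> complex) \<Rightarrow> (rat \<Rightarrow> complex)" where
  "sigma_int i = (if i \<ge> 0 then sigma ^^ nat i else sigma_inv ^^ nat (- i))"

definition Levels :: "(rat \<Rightarrow> complex) \<Rightarrow> rat set" where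
  "Levels q = {slope (q - sigma_int i q) | i. True} - {0}"

text \<open>q_a = sum_{j=1}^s a_j x^(j/r); points of C^s are represented as functions
nat => complex vanishing outside {1..s} (product topology = topology of C^s).\<close>
definition q_of :: "nat \<Rightarrow> nat \<Rightarrow> (nat \<Rightarrow> complex) \<Rightarrow> (rat \<Rightarrow> complex)" where
  "q_of r s a = (\<lambda>k. \<Sum>j\<in>{1..s}. if k = of_nat j / of_nat r then a j else 0)"

definition Bset :: "(rat \<Rightarrow> complex) \<Rightarrow> (nat \<Rightarrow> complex) set" where
  "Bset q = (let r = ram q; s = nat \<lfloor>of_nat r * slope q\<rfloor> in
     {a. (\<forall>j. j \<notin> {1..s} \<longrightarrow> a j = 0) \<and>
         (\<forall>k\<le>r. \<forall>l\<le>r.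
            slope ((sigma ^^ k) (q_of r s a) - (sigma ^^ l) (q_of r s a))
          = slope ((sigma ^^ k) q - (sigma ^^ l) q))})"

definition loops_at :: "'a::topological_space set \<Rightarrow> 'a \<Rightarrow> (real \<Rightarrow> 'a) set" where
  "loops_at S a = {p. path p \<and> path_image p \<subseteq> S \<and> pathstart p = a \<and> pathfinish p = a}"

definition loop_class :: "'a::topological_space set \<Rightarrow> 'a \<Rightarrow> (real \<Rightarrow> 'a) \<Rightarrow> (real \<Rightarrow> 'a) set" where
  "loop_class S a p = {q \<in> loops_at S a. homotopic_paths S p q}"

definition fundamental_group :: "'a::topological_space set \<Rightarrow> 'a \<Rightarrow> ((real \<Rightarrow> 'a) set) monoid" where
  "fundamental_group S a =
     \<lparr>carrier = loop_class S a ` loops_at S a,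
      mult = (\<lambda>P Q. {r. \<exists>p\<in>P. \<exists>q\<in>Q. r \<in> loop_class S a (p +++ q)}),
      one = loop_class S a (\<lambda>_. a)\<rparr>"

end

theory Submission
  imports Defs "HOL-Complex_Analysis.Complex_Analysis"
begin

lemma of_rat_Ints_iff: "(of_rat y :: real) \<in> \<int> \<longleftrightarrow> y \<in> \<int>"
proof
  assume "of_rat y \<in> (\<int>::real set)"
  then obtain n where "(of_rat y::real) = of_int n" by (auto elim: Ints_cases)
  then have "of_rat y = (of_rat (of_int n) :: real)" by simp
  then have "y = of_int n" using of_rat_eq_iff by blast
  then show "y \<in> \<int>" by simp
next
  assume "y \<in> \<int>" then obtain n where "y = of_int n" by (auto elim: Ints_cases)
  then show "(of_rat y :: real) \<in> \<int>" by simp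
qed

lemma cor_of_rat: "(of_rat y :: complex) = of_real (of_rat y)"
proof -
  obtain a b where "quotient_of y = (a,b)" by (cases "quotient_of y")
  then have y: "y = of_int a / of_int b" by (rule quotient_of_div)
  show ?thesis unfolding y by (simp add: of_rat_divide)
qed

lemma cyc_eq1: "exp (2 * of_real pi * \<i> * of_rat y) = 1 \<longleftrightarrow> y \<in> \<int>"
proof -
  have "exp (2 * of_real pi * \<i> * of_rat y) = 1 \<longleftrightarrow> (\<exists>n::int. 2 * pi * of_rat y = of_int (2 * n) * pi)"
    by (simp add: exp_eq_1 cor_of_rat)
  also have "\<dots> \<longleftrightarrow> (\<exists>n::int. (of_rat y :: real) = of_int n)"
    by (auto simp: algebra_simps)
  also have "\<dots> \<longleftrightarrow> (of_rat y :: real) \<in> \<int>" by (auto elim: Ints_cases)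
  finally show ?thesis by (simp add: of_rat_Ints_iff)
qed

lemma sigma_pow: "(sigma ^^ k) f = (\<lambda>x. exp (- 2 * of_real pi * \<i> * of_rat x) ^ k * f x)"
  by (induction k) (auto simp: sigma_def)

lemma sigma_inv_pow: "(sigma_inv ^^ k) f = (\<lambda>x. exp (2 * of_real pi * \<i> * of_rat x) ^ k * f x)"
  by (induction k) (auto simp: sigma_inv_def)

lemma sigma_pow_apply: "(sigma ^^ k) f x = exp (2 * of_real pi * \<i> * of_rat (- of_nat k * x)) * f x"
proof -
  have "exp (- 2 * of_real pi * \<i> * of_rat x) ^ k = exp (of_nat k * (- 2 * of_real pi * \<i> * of_rat x))"
    by (simp only: exp_of_nat_mult)
  also have "\<dots> = exp (2 * of_real pi * \<i> * of_rat (- of_nat k * x))"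
    by (simp add: of_rat_mult of_rat_minus algebra_simps)
  finally show ?thesis by (simp add: sigma_pow)
qed

lemma sigma_int_apply: "sigma_int i f x = exp (2 * of_real pi * \<i> * of_rat (- of_int i * x)) * f x"
proof (cases "i \<ge> 0")
  case True
  then have "of_int i = (of_nat (nat i) :: rat)" by simp
  then show ?thesis using True by (simp add: sigma_int_def sigma_pow_apply)
next
  case False
  have "exp (2 * of_real pi * \<i> * of_rat x) ^ nat (-i) = exp (of_nat (nat (-i)) * (2 * of_real pi * \<i> * of_rat x))"
    by (simp only: exp_of_nat_mult)
  also have "\<dots> = exp (2 * of_real pi * \<i> * of_rat (- of_int i * x))"
    using False by (simp add: of_rat_mult of_rat_minus algebra_simps)
  finally show ?thesis using False by (simp add: sigma_int_def sigma_inv_pow)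
qed

lemma Ints_uminus_iff: "(- (y::rat)) \<in> \<int> \<longleftrightarrow> y \<in> \<int>"
  by (metis Ints_minus minus_minus)

lemma sigma_diff_nz:
  "((sigma ^^ k) f - (sigma ^^ l) f) x \<noteq> 0 \<longleftrightarrow> f x \<noteq> 0 \<and> of_int (int k - int l) * x \<notin> \<int>"
proof -
  define c where "c = 2 * of_real pi * \<i>"
  have e: "exp (c * of_rat (- of_nat k * x)) = exp (c * of_rat (- of_nat l * x)) * exp (c * of_rat (- (of_int (int k - int l) * x)))"
    by (simp add: exp_add[symmetric] of_rat_mult of_rat_minus of_rat_diff algebra_simps)
  have "((sigma ^^ k) f - (sigma ^^ l) f) x = exp (c * of_rat (- of_nat l * x)) * (exp (c * of_rat (- (of_int (int k - int l) * x))) - 1) * f x"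
    unfolding fun_diff_def sigma_pow_apply c_def[symmetric] e by (simp add: algebra_simps)
  then show ?thesis using cyc_eq1[of "- (of_int (int k - int l) * x)"]
    by (auto simp: c_def Ints_uminus_iff)
qed

lemma sigma_int_nz:
  "(f - sigma_int i f) x \<noteq> 0 \<longleftrightarrow> f x \<noteq> 0 \<and> of_int i * x \<notin> \<int>"
proof -
  have "(f - sigma_int i f) x = (1 - exp (2 * of_real pi * \<i> * of_rat (- (of_int i * x)))) * f x"
    by (simp add: sigma_int_apply algebra_simps)
  then show ?thesis using cyc_eq1[of "- (of_int i * x)"]
    by (auto simp: Ints_uminus_iff)
qed

definition sl :: "rat set \<Rightarrow> rat" where "sl S = (if S = {} then 0 else Max S)"

lemma slope_sl: "slope g = sl {x. g x \<noteq> 0}" by (simp add: slope_def sl_def)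

lemma ram_ex:
  assumes "exp_factor q"
  shows "\<exists>r::nat. r \<ge> 1 \<and> (\<forall>k. q k \<noteq> 0 \<longrightarrow> k > 0 \<and> of_nat r * k \<in> \<int>)"
proof -
  define S where "S = {k. q k \<noteq> 0}"
  have fin: "finite S" and pos: "\<And>k. k \<in> S \<Longrightarrow> k > 0" using assms by (auto simp: exp_factor_def S_def)
  define N where "N = (\<Prod>k\<in>S. nat (snd (quotient_of k)))"
  have dpos: "\<And>k. snd (quotient_of k) > 0" using quotient_of_denom_pos' by blast
  have "N \<ge> 1" unfolding N_def using dpos
    by (metis (no_types, lifting) One_nat_def Suc_leI le_numeral_extra(4) prod_pos zero_less_nat_eq)
  moreover have "of_nat N * k \<in> \<int>" if "k \<in> S" for k
  proof -
    obtain a b where ab: "quotient_of k = (a,b)" by (cases "quotient_of k")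
    then have k: "k = of_int a / of_int b" by (rule quotient_of_div)
    have b: "b > 0" using dpos[of k] ab by simp
    have "N = nat b * (\<Prod>k\<in>S-{k}. nat (snd (quotient_of k)))"
      unfolding N_def using fin that ab by (simp add: prod.remove)
    then have "of_nat N * k = of_int a * of_nat (\<Prod>k\<in>S-{k}. nat (snd (quotient_of k)))"
      using b unfolding k by (simp add: field_simps)
    then show ?thesis by (auto intro!: Ints_mult Ints_prod)
  qed
  ultimately show ?thesis using pos unfolding S_def by auto
qed

lemma ram_props:
  assumes "exp_factor q"
  shows "ram q \<ge> 1" "\<And>k. q k \<noteq> 0 \<Longrightarrow> k > 0 \<and> of_nat (ram q) * k \<in> \<int>"
proof -
  have "ram q \<ge> 1 \<and> (\<forall>k. q k \<noteq> 0 \<longrightarrow> k > 0 \<and> of_nat (ram q) * k \<in> \<int>)"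
    unfolding ram_def using ram_ex[OF assms] by (rule LeastI_ex)
  then show "ram q \<ge> 1" "\<And>k. q k \<noteq> 0 \<Longrightarrow> k > 0 \<and> of_nat (ram q) * k \<in> \<int>" by auto
qed

lemma supp_form:
  assumes "exp_factor q" "q x \<noteq> 0"
  shows "\<exists>j\<in>{1..nat \<lfloor>of_nat (ram q) * slope q\<rfloor>}. x = of_nat j / of_nat (ram q)"
proof -
  define r where "r = ram q"
  have r: "r \<ge> 1" using ram_props[OF assms(1)] r_def by auto
  define S where "S = {k. q k \<noteq> 0}"
  have fin: "finite S" using assms by (auto simp: exp_factor_def S_def)
  have xS: "x \<in> S" using assms S_def by auto
  have sl: "slope q = Max S" using xS by (auto simp: slope_def S_def)
  have "slope q \<in> S" using sl fin xS Max_in by auto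
  then obtain M where M: "of_nat r * slope q = of_int M" using ram_props(2)[OF assms(1)] r_def S_def
    by (auto elim!: Ints_cases)
  obtain m where m: "of_nat r * x = of_int m" using ram_props(2)[OF assms] r_def by (auto elim!: Ints_cases)
  have "x > 0" using ram_props(2)[OF assms] by auto
  then have "of_int m > (0::rat)" using m r by (metis of_nat_0_less_iff order_less_le_trans zero_less_mult_iff zero_less_one)
  then have m0: "m > 0" by simp
  have "x \<le> slope q" using sl fin xS by auto
  then have "of_nat r * x \<le> of_nat r * slope q" by (simp add: mult_left_mono)
  then have "m \<le> M" using m M by simp
  have "nat m \<in> {1..nat \<lfloor>of_nat r * slope q\<rfloor>}" using m0 \<open>m \<le> M\<close> M by (simp add: nat_mono Suc_le_eq)
  moreover have "x = of_nat (nat m) / of_nat r" using m m0 r by (simp add: field_simps)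
  ultimately show ?thesis unfolding r_def by blast
qed

lemma q_of_nz:
  assumes "r \<ge> 1"
  shows "q_of r s a x \<noteq> 0 \<longleftrightarrow> (\<exists>j\<in>{1..s}. x = of_nat j / of_nat r \<and> a j \<noteq> 0)"
proof (cases "\<exists>j\<in>{1..s}. x = of_nat j / of_nat r")
  case True
  then obtain j0 where j0: "j0 \<in> {1..s}" "x = of_nat j0 / of_nat r" by blast
  have eq: "(x = of_nat j / of_nat r) \<longleftrightarrow> j = j0" for j
    using assms j0 by (auto simp: field_simps)
  have "q_of r s a x = (\<Sum>j\<in>{1..s}. if j = j0 then a j else 0)"
    unfolding q_of_def by (rule sum.cong) (auto simp: eq)
  also have "\<dots> = a j0" using j0 by simp
  finally show ?thesis using eq j0 by auto
next
  case False
  then have "q_of r s a x = 0" unfolding q_of_def by (intro sum.neutral) auto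
  then show ?thesis using False by auto
qed

lemma jr_simps:
  assumes "r \<ge> 1" "j \<ge> 1"
  shows "(of_nat j / of_nat r :: rat) > 0" "nat \<lfloor>of_nat r * (of_nat j / of_nat r :: rat)\<rfloor> = j"
  using assms by auto

lemma key:
  fixes D Sa :: "rat set" and P :: "rat \<Rightarrow> bool"
  assumes r: "r \<ge> 1"
    and DD: "\<And>x. x \<in> D \<Longrightarrow> \<exists>j\<in>{1..s}. x = of_nat j / of_nat r"
    and DP: "\<And>x. x \<in> D \<Longrightarrow> P x"
    and Sa: "Sa = {x. (\<exists>j\<in>{1..s}. x = of_nat j / of_nat r \<and> a j \<noteq> 0) \<and> P x}"
  shows "sl Sa = sl D \<longleftrightarrow> (sl D \<noteq> 0 \<longrightarrow> a (nat \<lfloor>of_nat r * sl D\<rfloor>) \<noteq> 0) \<and>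
           (\<forall>j\<in>{1..s}. P (of_nat j / of_nat r) \<and> sl D < of_nat j / of_nat r \<longrightarrow> a j = 0)"
proof -
  have "D \<subseteq> (\<lambda>j. of_nat j / of_nat r) ` {1..s}" using DD by blast
  then have finD: "finite D" by (rule finite_subset) simp
  have "Sa \<subseteq> (\<lambda>j. of_nat j / of_nat r) ` {1..s}" unfolding Sa by blast
  then have finS: "finite Sa" by (rule finite_subset) simp
  show ?thesis
  proof
    assume eq: "sl Sa = sl D"
    show "(sl D \<noteq> 0 \<longrightarrow> a (nat \<lfloor>of_nat r * sl D\<rfloor>) \<noteq> 0) \<and>
           (\<forall>j\<in>{1..s}. P (of_nat j / of_nat r) \<and> sl D < of_nat j / of_nat r \<longrightarrow> a j = 0)"
    proof (intro conjI impI ballI)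
      assume "sl D \<noteq> 0"
      then have ne: "Sa \<noteq> {}" using eq by (auto simp: sl_def split: if_splits)
      have "sl Sa \<in> Sa" using ne finS by (simp add: sl_def)
      then have "sl D \<in> Sa" using eq by simp
      then obtain j where j: "j \<in> {1..s}" "sl D = of_nat j / of_nat r" "a j \<noteq> 0" using Sa by auto
      then show "a (nat \<lfloor>of_nat r * sl D\<rfloor>) \<noteq> 0" using jr_simps(2)[OF r, of j] by simp
    next
      fix j assume j: "j \<in> {1..s}" and h: "P (of_nat j / of_nat r) \<and> sl D < of_nat j / of_nat r"
      show "a j = 0"
      proof (rule ccontr)
        assume "a j \<noteq> 0"
        then have jS: "of_nat j / of_nat r \<in> Sa" using j h Sa by auto
        then have "of_nat j / of_nat r \<le> sl Sa" using finS by (auto simp: sl_def)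
        then show False using h eq by simp
      qed
    qed
  next
    assume h: "(sl D \<noteq> 0 \<longrightarrow> a (nat \<lfloor>of_nat r * sl D\<rfloor>) \<noteq> 0) \<and>
           (\<forall>j\<in>{1..s}. P (of_nat j / of_nat r) \<and> sl D < of_nat j / of_nat r \<longrightarrow> a j = 0)"
    show "sl Sa = sl D"
    proof (cases "D = {}")
      case True
      have "Sa = {}"
      proof (rule ccontr)
        assume "Sa \<noteq> {}"
        then obtain x where "x \<in> Sa" by auto
        then obtain j where "j \<in> {1..s}" "x = of_nat j / of_nat r" "a j \<noteq> 0" "P x" using Sa by auto
        moreover have "sl D < of_nat j / of_nat r" using True jr_simps(1)[OF r, of j] calculation by (auto simp: sl_def)
        ultimately show False using h by auto
      qed
      then show ?thesis using True by (simp add: sl_def)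
    next
      case False
      have muD: "sl D \<in> D" using False finD Max_in by (auto simp: sl_def)
      then obtain j0 where j0: "j0 \<in> {1..s}" "sl D = of_nat j0 / of_nat r" using DD by blast
      have "sl D \<noteq> 0" using j0 jr_simps(1)[OF r, of j0] r by auto
      then have "a j0 \<noteq> 0" using h j0 jr_simps(2)[OF r, of j0] by auto
      then have muS: "sl D \<in> Sa" using j0 DP[OF muD] Sa by auto
      have le: "x \<le> sl D" if "x \<in> Sa" for x
      proof -
        obtain j where "j \<in> {1..s}" "x = of_nat j / of_nat r" "a j \<noteq> 0" "P x" using Sa \<open>x \<in> Sa\<close> by auto
        then have "\<not> (sl D < x)" using h by blast
        then show ?thesis by simp
      qed
      have "Max Sa = sl D" by (rule Max_eqI) (use finS muS le in auto)
      then show ?thesis using muS by (auto simp: sl_def)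
    qed
  qed
qed


lemma Ints_add_iff: "(z::rat) \<in> \<int> \<Longrightarrow> (y + z \<in> \<int>) \<longleftrightarrow> y \<in> \<int>"
  by (metis Ints_add Ints_diff add_diff_cancel_right')

lemma Bset_char:
  assumes ef: "exp_factor q"
  shows "\<exists>Z L. finite L \<and> card L = card (Levels q) \<and> Bset q = {a. (\<forall>j\<in>Z. a j = 0) \<and> (\<forall>j\<in>L. a j \<noteq> 0)}"
proof -
  define r where "r = ram q"
  define s where "s = nat \<lfloor>of_nat r * slope q\<rfloor>"
  have r1: "r \<ge> 1" using ram_props[OF ef] r_def by simp
  have rint: "\<And>x. q x \<noteq> 0 \<Longrightarrow> of_nat r * x \<in> \<int>" using ram_props(2)[OF ef] r_def by blast
  have sform: "\<And>x. q x \<noteq> 0 \<Longrightarrow> \<exists>j\<in>{1..s}. x = of_nat j / of_nat r"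
    using supp_form[OF ef] unfolding r_def s_def by blast
  have finq: "finite {x. q x \<noteq> 0}" using ef by (simp add: exp_factor_def)
  define D where "D d = {x. q x \<noteq> 0 \<and> of_int d * x \<notin> \<int>}" for d :: int
  define C where "C d a \<longleftrightarrow> (sl (D d) \<noteq> 0 \<longrightarrow> a (nat \<lfloor>of_nat r * sl (D d)\<rfloor>) \<noteq> 0) \<and>
      (\<forall>j\<in>{1..s}. (of_int d :: rat) * (of_nat j / of_nat r) \<notin> \<int> \<and> sl (D d) < of_nat j / of_nat r \<longrightarrow> a j = 0)"
    for d and a :: "nat \<Rightarrow> complex"
  have per: "of_int d * x \<in> \<int> \<longleftrightarrow> of_int (d mod int r) * x \<in> \<int>" if "of_nat r * x \<in> \<int>" for d and x :: rat
  proof -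
    have "of_int d * x = of_int (d mod int r) * x + of_int (d div int r) * (of_nat r * x)"
    proof -
      have "d = d mod int r + int r * (d div int r)" by simp
      then have "(of_int d :: rat) = of_int (d mod int r) + of_nat r * of_int (d div int r)"
        by (metis of_int_add of_int_mult of_int_of_nat_eq)
      then show ?thesis by (simp add: algebra_simps)
    qed
    moreover have "of_int (d div int r) * (of_nat r * x) \<in> \<int>" using that by (simp add: Ints_mult)
    ultimately show ?thesis using Ints_add_iff by simp
  qed
  have Dper: "D d = D (d mod int r)" for d using per rint by (auto simp: D_def)
  have jper: "of_nat r * (of_nat j / of_nat r :: rat) \<in> \<int>" for j using r1 by simp
  have Cper: "C d a = C (d mod int r) a" for d a
  proof -
    have per': "((of_int d :: rat) * (of_nat j / of_nat r) \<in> \<int>) = (of_int (d mod int r) * (of_nat j / of_nat r :: rat) \<in> \<int>)" for j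
      by (rule per[OF jper])
    show ?thesis unfolding C_def Dper[of d] by (simp only: per')
  qed
  have finD: "finite (D d)" for d by (rule finite_subset[OF _ finq]) (auto simp: D_def)
  have slq: "slope (q - sigma_int i q) = sl (D i)" for i
    unfolding slope_sl D_def by (simp only: sigma_int_nz)
  have pairC: "slope ((sigma ^^ k) (q_of r s a) - (sigma ^^ l) (q_of r s a)) = slope ((sigma ^^ k) q - (sigma ^^ l) q)
          \<longleftrightarrow> C (int k - int l) a" for k l a
  proof -
    define P where "P x \<longleftrightarrow> of_int (int k - int l) * x \<notin> \<int>" for x :: rat
    have e1: "slope ((sigma ^^ k) q - (sigma ^^ l) q) = sl (D (int k - int l))"
      unfolding slope_sl D_def by (simp only: sigma_diff_nz)
    have e2: "slope ((sigma ^^ k) (q_of r s a) - (sigma ^^ l) (q_of r s a))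
       = sl {x. (\<exists>j\<in>{1..s}. x = of_nat j / of_nat r \<and> a j \<noteq> 0) \<and> P x}"
      unfolding slope_sl P_def by (simp only: sigma_diff_nz q_of_nz[OF r1])
    show ?thesis unfolding e1 e2 C_def P_def[symmetric]
    proof (rule key[OF r1])
      show "\<And>x. x \<in> D (int k - int l) \<Longrightarrow> \<exists>j\<in>{1..s}. x = of_nat j / of_nat r"
        using sform unfolding D_def by blast
      show "\<And>x. x \<in> D (int k - int l) \<Longrightarrow> P x" unfolding D_def P_def by blast
    qed (rule refl)
  qed
  have memB: "a \<in> Bset q \<longleftrightarrow> (\<forall>j. j \<notin> {1..s} \<longrightarrow> a j = 0) \<and> (\<forall>k\<le>r. \<forall>l\<le>r. C (int k - int l) a)" for a
    unfolding Bset_def Let_def r_def[symmetric] s_def[symmetric] using pairC by simp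
  have pairs: "(\<forall>k\<le>r. \<forall>l\<le>r. C (int k - int l) a) \<longleftrightarrow> (\<forall>d\<in>{0..<int r}. C d a)" for a
  proof
    assume h: "\<forall>k\<le>r. \<forall>l\<le>r. C (int k - int l) a"
    show "\<forall>d\<in>{0..<int r}. C d a"
    proof
      fix d assume d: "d \<in> {0..<int r}"
      then have "nat d \<le> r" by auto
      then have "C (int (nat d) - int 0) a" using h by blast
      then show "C d a" using d by simp
    qed
  next
    assume h: "\<forall>d\<in>{0..<int r}. C d a"
    show "\<forall>k\<le>r. \<forall>l\<le>r. C (int k - int l) a"
    proof (intro allI impI)
      fix k l assume "k \<le> r" "l \<le> r"
      have "(int k - int l) mod int r \<in> {0..<int r}" using r1 by simp
      then show "C (int k - int l) a" using h Cper by metis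
    qed
  qed
  have Lev: "Levels q = (\<lambda>d. sl (D d)) ` {0..<int r} - {0}"
  proof -
    have "{slope (q - sigma_int i q) | i. True} = (\<lambda>d. sl (D d)) ` {0..<int r}"
    proof
      show "{slope (q - sigma_int i q) | i. True} \<subseteq> (\<lambda>d. sl (D d)) ` {0..<int r}"
      proof
        fix y assume "y \<in> {slope (q - sigma_int i q) | i. True}"
        then obtain i where "y = sl (D i)" using slq by auto
        moreover have "i mod int r \<in> {0..<int r}" using r1 by simp
        ultimately show "y \<in> (\<lambda>d. sl (D d)) ` {0..<int r}" using Dper by (metis image_eqI)
      qed
      show "(\<lambda>d. sl (D d)) ` {0..<int r} \<subseteq> {slope (q - sigma_int i q) | i. True}"
        using slq by auto
    qed
    then show ?thesis unfolding Levels_def by simp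
  qed
  define Z where "Z = {j. j \<notin> {1..s}} \<union> {j. \<exists>d\<in>{0..<int r}. j \<in> {1..s} \<and>
      (of_int d :: rat) * (of_nat j / of_nat r) \<notin> \<int> \<and> sl (D d) < of_nat j / of_nat r}"
  define L where "L = (\<lambda>\<mu>. nat \<lfloor>of_nat r * \<mu>\<rfloor>) ` Levels q"
  have finLev: "finite (Levels q)" unfolding Lev by simp
  have inj: "inj_on (\<lambda>\<mu>. nat \<lfloor>of_nat r * \<mu>\<rfloor>) (Levels q)"
  proof
    have form: "\<mu> = of_nat (nat \<lfloor>of_nat r * \<mu>\<rfloor>) / of_nat r" if mu: "\<mu> \<in> Levels q" for \<mu>
    proof -
      obtain d where "\<mu> = sl (D d)" "\<mu> \<noteq> 0" using mu Lev by auto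
      then have "D d \<noteq> {}" "\<mu> = Max (D d)" by (auto simp: sl_def split: if_splits)
      then have "\<mu> \<in> D d" using finD Max_in by metis
      then obtain j where "j \<in> {1..s}" "\<mu> = of_nat j / of_nat r" using sform[of \<mu>] by (auto simp: D_def)
      then show ?thesis using jr_simps(2)[OF r1, of j] by simp
    qed
    fix x y assume "x \<in> Levels q" "y \<in> Levels q" "nat \<lfloor>of_nat r * x\<rfloor> = nat \<lfloor>of_nat r * y\<rfloor>"
    then show "x = y" using form by metis
  qed
  have Bchar: "a \<in> Bset q \<longleftrightarrow> (\<forall>j\<in>Z. a j = 0) \<and> (\<forall>j\<in>L. a j \<noteq> 0)" for a
  proof -
    have "a \<in> Bset q \<longleftrightarrow> (\<forall>j. j \<notin> {1..s} \<longrightarrow> a j = 0) \<and> (\<forall>d\<in>{0..<int r}. C d a)"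
      using memB pairs by simp
    also have "\<dots> \<longleftrightarrow> (\<forall>j\<in>Z. a j = 0) \<and> (\<forall>j\<in>L. a j \<noteq> 0)"
      unfolding C_def Z_def L_def Lev by blast
    finally show ?thesis .
  qed
  have "Bset q = {a. (\<forall>j\<in>Z. a j = 0) \<and> (\<forall>j\<in>L. a j \<noteq> 0)}" using Bchar by blast
  moreover have "finite L" unfolding L_def using finLev by simp
  moreover have "card L = card (Levels q)" unfolding L_def using card_image[OF inj] .
  ultimately show ?thesis by blast
qed


lemma path_coord: "path (p :: real \<Rightarrow> 'i \<Rightarrow> 'b::topological_space) \<Longrightarrow> path (\<lambda>t. p t j)"
  unfolding path_def by (rule continuous_on_product_then_coordinatewise)

lemma join_coord: "(\<lambda>t. (p +++ q) t j) = (\<lambda>t. p t j) +++ (\<lambda>t. q t j)"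
  by (auto simp: joinpaths_def)

locale Bsp =
  fixes Z L :: "nat set" and b :: "nat \<Rightarrow> complex" and B :: "(nat \<Rightarrow> complex) set"
  assumes finL: "finite L" and bB: "b \<in> B" and Bdef: "B = {a. (\<forall>j\<in>Z. a j = 0) \<and> (\<forall>j\<in>L. a j \<noteq> 0)}"
begin

lemma LZ: "j \<in> L \<Longrightarrow> j \<notin> Z" using bB Bdef by auto

lemma loop_coord:
  assumes "p \<in> loops_at B b" "j \<in> L"
  shows "path (\<lambda>t. p t j)" "0 \<notin> path_image (\<lambda>t. p t j)"
    "pathstart (\<lambda>t. p t j) = b j" "pathfinish (\<lambda>t. p t j) = b j"
proof -
  show "path (\<lambda>t. p t j)" using assms path_coord by (auto simp: loops_at_def)
  show "pathstart (\<lambda>t. p t j) = b j" "pathfinish (\<lambda>t. p t j) = b j"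
    using assms by (auto simp: loops_at_def pathstart_def pathfinish_def)
  have pB: "p t \<in> B" if "t \<in> {0..1}" for t using assms that by (auto simp: loops_at_def path_image_def)
  have "p t j \<noteq> 0" if "t \<in> {0..1}" for t using pB[OF that] assms(2) unfolding Bdef by blast
  then show "0 \<notin> path_image (\<lambda>t. p t j)" unfolding path_image_def by auto
qed

lemma hom_coord:
  assumes "homotopic_paths B p q" "j \<in> L"
  shows "homotopic_paths (-{0}) (\<lambda>t. p t j) (\<lambda>t. q t j)"
proof -
  have "homotopic_paths (-{0}) ((\<lambda>a. a j) \<circ> p) ((\<lambda>a. a j) \<circ> q)"
  proof (rule homotopic_paths_continuous_image[OF assms(1)])
    show "continuous_on B (\<lambda>a. a j)"
      by (rule continuous_on_subset[OF continuous_on_product_coordinates]) simp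
    show "(\<lambda>a. a j) \<in> B \<rightarrow> - {0}" using assms(2) Bdef by auto
  qed
  then show ?thesis by (simp add: o_def)
qed

lemma coord_hom:
  assumes p: "p \<in> loops_at B b" and q: "q \<in> loops_at B b"
    and h: "\<forall>j\<in>L. homotopic_paths (-{0}) (\<lambda>t. p t j) (\<lambda>t. q t j)"
  shows "homotopic_paths B p q"
proof -
  have ex: "\<forall>j\<in>L. \<exists>h. continuous_on ({0..1} \<times> {0..1}) h \<and>
          h \<in> ({0..1} \<times> {0..1}) \<rightarrow> -{0} \<and>
          (\<forall>x \<in> {0..1}. h(0,x) = p x j) \<and>
          (\<forall>x \<in> {0..1}. h(1,x) = q x j) \<and>
          (\<forall>t \<in> {0..1::real}. pathstart(h \<circ> Pair t) = pathstart (\<lambda>t. p t j) \<and>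
                        pathfinish(h \<circ> Pair t) = pathfinish (\<lambda>t. p t j))"
    using h unfolding homotopic_paths by blast
  obtain hh where hh: "\<And>j. j \<in> L \<Longrightarrow> continuous_on ({0..1} \<times> {0..1}) (hh j) \<and>
          hh j \<in> ({0..1} \<times> {0..1}) \<rightarrow> -{0} \<and>
          (\<forall>x \<in> {0..1}. hh j (0,x) = p x j) \<and>
          (\<forall>x \<in> {0..1}. hh j (1,x) = q x j) \<and>
          (\<forall>t \<in> {0..1::real}. pathstart(hh j \<circ> Pair t) = pathstart (\<lambda>t. p t j) \<and>
                        pathfinish(hh j \<circ> Pair t) = pathfinish (\<lambda>t. p t j))"
    using bchoice[OF ex] by blast
  define H where "H z = (\<lambda>j. if j \<in> L then hh j z
       else of_real (1 - fst z) * p (snd z) j + of_real (fst z) * q (snd z) j)" for z :: "real \<times> real"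
  have pc: "continuous_on {0..1} p" "continuous_on {0..1} q"
    using p q by (auto simp: loops_at_def path_def)
  have pB: "p x \<in> B" "q x \<in> B" if "x \<in> {0..1}" for x
    using p q that by (auto simp: loops_at_def path_image_def)
  have ends: "p 0 = b" "p 1 = b" "q 0 = b" "q 1 = b"
    using p q by (auto simp: loops_at_def pathstart_def pathfinish_def)
  show ?thesis unfolding homotopic_paths
  proof (intro exI conjI)
    show "continuous_on ({0..1} \<times> {0..1}) H"
    proof (rule continuous_on_coordinatewise_then_product)
      fix j
      show "continuous_on ({0..1} \<times> {0..1}) (\<lambda>z. H z j)"
      proof (cases "j \<in> L")
        case True then show ?thesis using hh[OF True] by (simp add: H_def)
      next
        case False
        have cp: "continuous_on ({0..1} \<times> {0..1}) (\<lambda>z. p (snd z) j)"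
          by (rule continuous_on_compose2[OF continuous_on_product_then_coordinatewise[OF pc(1)] continuous_on_snd]) auto
        have cq: "continuous_on ({0..1} \<times> {0..1}) (\<lambda>z. q (snd z) j)"
          by (rule continuous_on_compose2[OF continuous_on_product_then_coordinatewise[OF pc(2)] continuous_on_snd]) auto
        show ?thesis using False cp cq unfolding H_def by (auto intro!: continuous_intros)
      qed
    qed
    show "H \<in> {0..1} \<times> {0..1} \<rightarrow> B"
    proof
      fix z assume z: "z \<in> {0..1::real} \<times> {0..1::real}"
      then have s: "snd z \<in> {0..1}" by auto
      show "H z \<in> B" unfolding Bdef
      proof (intro CollectI conjI ballI)
        fix j assume "j \<in> Z"
        then have "j \<notin> L" "p (snd z) j = 0" "q (snd z) j = 0" using LZ pB[OF s] Bdef by auto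
        then show "H z j = 0" by (simp add: H_def)
      next
        fix j assume j: "j \<in> L"
        then show "H z j \<noteq> 0" using hh[OF j] z by (auto simp: H_def)
      qed
    qed
    show "\<forall>x\<in>{0..1}. H (0, x) = p x"
      using hh by (auto simp: H_def)
    show "\<forall>x\<in>{0..1}. H (1, x) = q x"
      using hh by (auto simp: H_def)
    show "\<forall>t\<in>{0..1}. pathstart (H \<circ> Pair t) = pathstart p \<and> pathfinish (H \<circ> Pair t) = pathfinish p"
    proof (intro ballI conjI)
      fix t :: real assume t: "t \<in> {0..1}"
      show "pathstart (H \<circ> Pair t) = pathstart p"
      proof
        fix j show "pathstart (H \<circ> Pair t) j = pathstart p j"
        proof (cases "j \<in> L")
          case True then show ?thesis using hh[OF True] t by (auto simp: H_def pathstart_def)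
        next
          case False then show ?thesis using ends by (simp add: H_def pathstart_def algebra_simps)
        qed
      qed
      show "pathfinish (H \<circ> Pair t) = pathfinish p"
      proof
        fix j show "pathfinish (H \<circ> Pair t) j = pathfinish p j"
        proof (cases "j \<in> L")
          case True then show ?thesis using hh[OF True] t by (auto simp: H_def pathfinish_def)
        next
          case False then show ?thesis using ends by (simp add: H_def pathfinish_def algebra_simps)
        qed
      qed
    qed
  qed
qed

end

context Bsp begin

lemma loops_join: "p \<in> loops_at B b \<Longrightarrow> q \<in> loops_at B b \<Longrightarrow> p +++ q \<in> loops_at B b"
  unfolding loops_at_def using path_image_join_subset by fastforce

lemma loop_refl: "p \<in> loops_at B b \<Longrightarrow> p \<in> loop_class B b p"
  by (auto simp: loop_class_def loops_at_def)

lemma class_memD: "q \<in> loop_class B b p \<Longrightarrow> homotopic_paths B p q \<and> q \<in> loops_at B b"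
  by (auto simp: loop_class_def)

lemma class_eq:
  assumes "homotopic_paths B p q"
  shows "loop_class B b p = loop_class B b q"
  using assms homotopic_paths_sym homotopic_paths_trans unfolding loop_class_def by blast

lemma mult_class:
  assumes p: "p \<in> loops_at B b" and q: "q \<in> loops_at B b"
  shows "mult (fundamental_group B b) (loop_class B b p) (loop_class B b q) = loop_class B b (p +++ q)"
proof -
  have pq: "pathfinish p = pathstart q" using p q by (simp add: loops_at_def)
  have "r \<in> loop_class B b (p +++ q)"
    if "p' \<in> loop_class B b p" "q' \<in> loop_class B b q" "r \<in> loop_class B b (p' +++ q')" for p' q' r
  proof -
    have "homotopic_paths B (p +++ q) (p' +++ q')"
      using homotopic_paths_join class_memD that(1,2) pq by blast
    then show ?thesis using class_eq that(3) by metis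
  qed
  moreover have "r \<in> loop_class B b (p +++ q) \<Longrightarrow> \<exists>p'\<in>loop_class B b p. \<exists>q'\<in>loop_class B b q. r \<in> loop_class B b (p' +++ q')" for r
    using loop_refl p q by blast
  ultimately show ?thesis unfolding fundamental_group_def by auto
qed

definition wk :: "(real \<Rightarrow> nat \<Rightarrow> complex) \<Rightarrow> nat \<Rightarrow> int" where
  "wk p j = \<lfloor>Re (winding_number (\<lambda>t. p t j) 0)\<rfloor>"

lemma wk_eq:
  assumes "p \<in> loops_at B b" "j \<in> L"
  shows "of_int (wk p j) = winding_number (\<lambda>t. p t j) 0"
proof -
  have "winding_number (\<lambda>t. p t j) 0 \<in> \<int>"
    using loop_coord[OF assms] by (intro integer_winding_number) auto
  then obtain k where k: "winding_number (\<lambda>t. p t j) 0 = of_int k" by (auto elim: Ints_cases)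
  then show ?thesis by (simp add: wk_def k)
qed

lemma wk_join:
  assumes "p \<in> loops_at B b" "q \<in> loops_at B b" "j \<in> L"
  shows "wk (p +++ q) j = wk p j + wk q j"
proof -
  have "of_int (wk (p +++ q) j) = winding_number ((\<lambda>t. p t j) +++ (\<lambda>t. q t j)) 0"
    using wk_eq[OF loops_join[OF assms(1,2)] assms(3)] by (simp add: join_coord)
  also have "\<dots> = winding_number (\<lambda>t. p t j) 0 + winding_number (\<lambda>t. q t j) 0"
    using loop_coord[OF assms(1,3)] loop_coord[OF assms(2,3)] by (intro winding_number_join) auto
  also have "\<dots> = of_int (wk p j + wk q j)" using wk_eq assms by simp
  finally show ?thesis by (simp only: of_int_eq_iff)
qed

lemma wk_hom:
  assumes "homotopic_paths B p q" "p \<in> loops_at B b" "q \<in> loops_at B b" "j \<in> L"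
  shows "wk p j = wk q j"
proof -
  have "winding_number (\<lambda>t. p t j) 0 = winding_number (\<lambda>t. q t j) 0"
    using winding_number_homotopic_paths hom_coord assms(1,4) by blast
  then have "(of_int (wk p j) :: complex) = of_int (wk q j)" using wk_eq assms(2-4) by simp
  then show ?thesis by (simp only: of_int_eq_iff)
qed

lemma wk_inj:
  assumes "p \<in> loops_at B b" "q \<in> loops_at B b" "\<forall>j\<in>L. wk p j = wk q j"
  shows "homotopic_paths B p q"
proof (rule coord_hom[OF assms(1,2)], intro ballI)
  fix j assume j: "j \<in> L"
  have "winding_number (\<lambda>t. p t j) 0 = winding_number (\<lambda>t. q t j) 0"
    using wk_eq[OF assms(1) j] wk_eq[OF assms(2) j] assms(3) j by metis
  then show "homotopic_paths (- {0}) (\<lambda>t. p t j) (\<lambda>t. q t j)"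
    using winding_number_homotopic_paths_eq loop_coord[OF assms(1) j] loop_coord[OF assms(2) j] by metis
qed

end

lemma exp_2pi_int: "exp (2 * of_real pi * \<i> * of_int k) = 1"
  unfolding exp_eq_1 by (intro conjI exI[of _ k]) simp_all

lemma circ_loop:
  fixes c :: complex and k :: int
  assumes c: "c \<noteq> 0"
  defines "g \<equiv> (\<lambda>t::real. c * exp (2 * of_real pi * \<i> * of_int k * of_real t))"
  shows "path g" "pathstart g = c" "pathfinish g = c" "0 \<notin> path_image g" "winding_number g 0 = of_int k"
proof -
  show "path g" unfolding g_def path_def by (intro continuous_intros)
  show "pathstart g = c" by (simp add: g_def pathstart_def)
  show "pathfinish g = c" using exp_2pi_int[of k] by (simp add: g_def pathfinish_def)
  show "0 \<notin> path_image g" using c by (auto simp: g_def path_image_def)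
  define h where "h t = Ln c + 2 * of_real pi * \<i> * of_int k * of_real t" for t :: real
  have "g = exp \<circ> h" unfolding g_def h_def using c by (auto simp: exp_add)
  moreover have "path h" unfolding h_def path_def by (intro continuous_intros)
  ultimately have "winding_number g 0 = (pathfinish h - pathstart h) / (2 * of_real pi * \<i>)"
    using winding_number_compose_exp by simp
  then show "winding_number g 0 = of_int k" by (simp add: h_def pathstart_def pathfinish_def)
qed

context Bsp begin

theorem pi1_iso: "fundamental_group B b \<cong> free_Abelian_group {..<card L}"
proof -
  define n where "n = card L"
  obtain e where e: "bij_betw e {..<n} L" using ex_bij_betw_nat_finite[OF finL] by (auto simp: atLeast0LessThan n_def)
  have eL: "i < n \<Longrightarrow> e i \<in> L" for i using e by (auto simp: bij_betw_def)
  have Le: "j \<in> L \<Longrightarrow> \<exists>i<n. e i = j" for j using e by (auto simp: bij_betw_def)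
  define W where "W p = Abs_poly_mapping (\<lambda>i. if i < n then wk p (e i) else 0)" for p
  have lookW: "Poly_Mapping.lookup (W p) = (\<lambda>i. if i < n then wk p (e i) else 0)" for p
  proof -
    have fin: "finite {i. (if i < n then wk p (e i) else 0) \<noteq> 0}"
      by (rule finite_subset[of _ "{..<n}"]) auto
    show ?thesis unfolding W_def using lookup_Abs_poly_mapping[OF fin] .
  qed
  have Weq: "W p = W q" if "\<forall>j\<in>L. wk p j = wk q j" for p q
    by (rule poly_mapping_eqI) (use that eL in \<open>simp add: lookW\<close>)
  define \<Phi> where "\<Phi> P = W (SOME p. p \<in> P)" for P
  have \<Phi>c: "\<Phi> (loop_class B b p) = W p" if p: "p \<in> loops_at B b" for p
  proof -
    let ?p = "SOME p'. p' \<in> loop_class B b p"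
    have "?p \<in> loop_class B b p" using loop_refl[OF p] by (rule someI[of "\<lambda>p'. p' \<in> loop_class B b p"])
    then have "homotopic_paths B p ?p" "?p \<in> loops_at B b" using class_memD by auto
    then have "\<forall>j\<in>L. wk ?p j = wk p j" using wk_hom p by metis
    then show ?thesis unfolding \<Phi>_def using Weq by blast
  qed
  have carrG: "carrier (fundamental_group B b) = loop_class B b ` loops_at B b"
    by (simp add: fundamental_group_def)
  have carrH: "carrier (free_Abelian_group {..<n}) = {c. Poly_Mapping.keys c \<subseteq> {..<n}}"
    by (simp add: free_Abelian_group_def)
  have WH: "W p \<in> carrier (free_Abelian_group {..<n})" for p
    unfolding carrH by (auto simp: in_keys_iff lookW split: if_splits)
  have hom: "\<Phi> \<in> hom (fundamental_group B b) (free_Abelian_group {..<n})"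
  proof (rule homI)
    fix x assume "x \<in> carrier (fundamental_group B b)"
    then obtain p where "p \<in> loops_at B b" "x = loop_class B b p" using carrG by auto
    then show "\<Phi> x \<in> carrier (free_Abelian_group {..<n})" using \<Phi>c WH by simp
  next
    fix x y assume "x \<in> carrier (fundamental_group B b)" "y \<in> carrier (fundamental_group B b)"
    then obtain p q where p: "p \<in> loops_at B b" "x = loop_class B b p"
      and q: "q \<in> loops_at B b" "y = loop_class B b q" using carrG by auto
    have "\<Phi> (x \<otimes>\<^bsub>fundamental_group B b\<^esub> y) = W (p +++ q)"
      using mult_class p q \<Phi>c loops_join by simp
    also have "\<dots> = W p + W q"
      by (rule poly_mapping_eqI) (use p q eL wk_join in \<open>simp add: lookW lookup_add\<close>)
    also have "\<dots> = \<Phi> x \<otimes>\<^bsub>free_Abelian_group {..<n}\<^esub> \<Phi> y"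
      using p q \<Phi>c by (simp add: free_Abelian_group_def)
    finally show "\<Phi> (x \<otimes>\<^bsub>fundamental_group B b\<^esub> y) = \<Phi> x \<otimes>\<^bsub>free_Abelian_group {..<n}\<^esub> \<Phi> y" .
  qed
  have inj: "inj_on \<Phi> (carrier (fundamental_group B b))"
  proof
    fix x y assume "x \<in> carrier (fundamental_group B b)" "y \<in> carrier (fundamental_group B b)" and xy: "\<Phi> x = \<Phi> y"
    then obtain p q where p: "p \<in> loops_at B b" "x = loop_class B b p"
      and q: "q \<in> loops_at B b" "y = loop_class B b q" using carrG by auto
    have "W p = W q" using xy p q \<Phi>c by simp
    then have lk: "\<And>i. i < n \<Longrightarrow> wk p (e i) = wk q (e i)" using lookW by metis
    have "\<forall>j\<in>L. wk p j = wk q j" using lk Le by blast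
    then have "homotopic_paths B p q" using wk_inj p q by blast
    then show "x = y" using class_eq p q by simp
  qed
  have surj: "carrier (free_Abelian_group {..<n}) \<subseteq> \<Phi> ` carrier (fundamental_group B b)"
  proof
    fix c assume c: "c \<in> carrier (free_Abelian_group {..<n})"
    define ki where "ki j = Poly_Mapping.lookup c (inv_into {..<n} e j)" for j
    define \<gamma> where "\<gamma> t = (\<lambda>j. if j \<in> L then b j * exp (2 * of_real pi * \<i> * of_int (ki j) * of_real t) else b j)" for t :: real
    have bL: "j \<in> L \<Longrightarrow> b j \<noteq> 0" for j using bB Bdef by auto
    have coordL: "(\<lambda>t. \<gamma> t j) = (\<lambda>t. b j * exp (2 * of_real pi * \<i> * of_int (ki j) * of_real t))" if "j \<in> L" for j
      using that by (simp add: \<gamma>_def)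
    have coordN: "(\<lambda>t. \<gamma> t j) = (\<lambda>t. b j)" if "j \<notin> L" for j
      using that by (simp add: \<gamma>_def)
    have "path \<gamma>" unfolding path_def
    proof (rule continuous_on_coordinatewise_then_product)
      fix j show "continuous_on {0..1} (\<lambda>t. \<gamma> t j)"
      proof (cases "j \<in> L")
        case True then show ?thesis unfolding coordL[OF True] using circ_loop(1)[OF bL[OF True], of "ki j"] by (simp add: path_def)
      next
        case False show ?thesis unfolding coordN[OF False] by simp
      qed
    qed
    moreover have "pathstart \<gamma> = b" "pathfinish \<gamma> = b"
      using exp_2pi_int by (auto simp: \<gamma>_def pathstart_def pathfinish_def)
    moreover have "path_image \<gamma> \<subseteq> B"
    proof
      fix a assume "a \<in> path_image \<gamma>"
      then obtain t where a: "a = \<gamma> t" by (auto simp: path_image_def)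
      have "\<forall>j\<in>Z. a j = 0"
      proof
        fix j assume "j \<in> Z"
        then have "j \<notin> L" "b j = 0" using LZ bB Bdef by auto
        then show "a j = 0" by (simp add: a \<gamma>_def)
      qed
      moreover have "\<forall>j\<in>L. a j \<noteq> 0" using bL by (simp add: a \<gamma>_def)
      ultimately show "a \<in> B" unfolding Bdef by blast
    qed
    ultimately have gl: "\<gamma> \<in> loops_at B b" by (simp add: loops_at_def)
    have "wk \<gamma> j = ki j" if j: "j \<in> L" for j
    proof -
      have "of_int (wk \<gamma> j) = winding_number (\<lambda>t. \<gamma> t j) 0" by (rule wk_eq[OF gl j])
      also have "\<dots> = of_int (ki j)" unfolding coordL[OF j] using circ_loop(5)[OF bL[OF j], of "ki j"] by simp
      finally show ?thesis by (simp only: of_int_eq_iff)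
    qed
    then have "W \<gamma> = c"
    proof -
      assume h: "\<And>j. j \<in> L \<Longrightarrow> wk \<gamma> j = ki j"
      show "W \<gamma> = c"
      proof (rule poly_mapping_eqI)
        fix i
        show "Poly_Mapping.lookup (W \<gamma>) i = Poly_Mapping.lookup c i"
        proof (cases "i < n")
          case True
          then have "inv_into {..<n} e (e i) = i" using e by (simp add: bij_betw_def inv_into_f_f)
          then show ?thesis using True h[OF eL[OF True]] by (simp add: lookW ki_def)
        next
          case False
          then have "i \<notin> Poly_Mapping.keys c" using c carrH by auto
          then show ?thesis using False by (simp add: lookW in_keys_iff)
        qed
      qed
    qed
    then have "c = \<Phi> (loop_class B b \<gamma>)" using \<Phi>c[OF gl] by simp
    moreover have "loop_class B b \<gamma> \<in> carrier (fundamental_group B b)" using gl carrG by simp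
    ultimately show "c \<in> \<Phi> ` carrier (fundamental_group B b)" by blast
  qed
  have "bij_betw \<Phi> (carrier (fundamental_group B b)) (carrier (free_Abelian_group {..<n}))"
    unfolding bij_betw_def using inj surj hom by (auto simp: hom_def)
  then have "\<Phi> \<in> iso (fundamental_group B b) (free_Abelian_group {..<n})"
    using hom by (simp add: iso_def)
  then show ?thesis unfolding is_iso_def n_def by blast
qed

end

theorem mainTheorem17:
  fixes q :: "rat \<Rightarrow> complex" and b :: "nat \<Rightarrow> complex"
  assumes "exp_factor q"
    and "b \<in> Bset q"
  shows "fundamental_group (Bset q) b \<cong> free_Abelian_group {..<card (Levels q)}"
proof -
  obtain Z L where fin: "finite L" and card: "card L = card (Levels q)"
    and B: "Bset q = {a. (\<forall>j\<in>Z. a j = 0) \<and> (\<forall>j\<in>L. a j \<noteq> 0)}"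
    using Bset_char[OF assms(1)] by blast
  interpret Bsp Z L b "Bset q" using fin assms(2) B by unfold_locales
  show ?thesis using pi1_iso card by simp
qed

end
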